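(* Let $a=e_1$, let $\Sigma$ be symmetric positive definite with minimal eigenvalue $\gamma_{\min}$, and let $\widehat\Sigma$ be symmetric with $\delta:=\|\Sigma-\widehat\Sigma\|_{op}\le\gamma_{\min}/2$. Let $(\underline n^*,\underline\lambda^* )$ minimize $R(\underline n,\underline\lambda)$ and let $(\hat{\underline n},\hat{\underline\lambda})$ minimize $\widehat R(\underline n,\underline\lambda)$, both over feasible unbiased pairs. Then \[ R(\hat{\underline n},\hat{\underline\lambda})\le R(\underline n^*,\underline\lambda^* )+\frac{4\delta}{\gamma_{\min}}\,\sigma^2_{\mathrm{classical}}. \]
   Context: $\mathcal I$ is a collection of nonempty subsets of $\{1,\dots,k\}$; $P_I:\mathbb{R}^k\to\mathbb{R}^{|I|}$ the coordinate projection onto $I$; for a matrix $A$, $A_I=P_IAP_I^\top$. Costs $c_I\in\mathbb{R}^m_{\ge0}$, budget $B\in\mathbb{R}^m_{\ge0}$, vector inequalities componentwise; an allocation $\underline n\in\mathbb{Z}^{\mathcal I}_{\ge0}$ is feasible if $\sum_In_Ic_I\le B$; weights $\lambda_I\in\mathbb{R}^{|I|}$ are unbiased if $\sum_{I:n_I>0}P_I^\top\lambda_I=a$. Define $R(\underline n,\underline\lambda)=\sum_{I:n_I>0}\frac1{n_I}\lambda_I^\top\Sigma_I\lambda_I$ and $\widehat R(\underline n,\underline\lambda)=\sum_{I:n_I>0}\frac1{n_I}\lambda_I^\top\widehat\Sigma_I\lambda_I$. $\sigma^2_{\mathrm{classical}}=\Sigma_{11}/n^0_{I^0}$ for some $I^0\in\mathcal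 I$ with $1\in I^0$, where $n^0_{I^0}\ge1$ is the largest integer $n$ with $nc_{I^0}\le B$. *)

theory Defs
  imports Complex_Main
begin

text \<open>Coordinates are the naturals 1..k. A vector in R^k is a function
  nat => real (only its values on {1..k} matter); a k x k matrix is nat => nat => real
  (only values on {1..k} x {1..k} matter). For a subset I of {1..k}, a weight vector
  lambda_I in R^|I| is a function nat => real, only its values on I matter.\<close>

definition qform :: "nat set \<Rightarrow> (nat \<Rightarrow> nat \<Rightarrow> real) \<Rightarrow> (nat \<Rightarrow> real) \<Rightarrow> real" where
  "qform I A x = (\<Sum>i\<in>I. \<Sum>j\<in>I. x i * A i j * x j)"
  \<comment> \<open>lambda_I^T A_I lambda_I, A_I = P_I A P_I^T\<close>

definition active :: "nat set set \<Rightarrow> (nat set \<Rightarrow> nat) \<Rightarrow> nat set set" where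
  "active \<I> n = {I \<in> \<I>. 0 < n I}"

definition risk :: "nat set set \<Rightarrow> (nat \<Rightarrow> nat \<Rightarrow> real) \<Rightarrow> (nat set \<Rightarrow> nat)
    \<Rightarrow> (nat set \<Rightarrow> nat \<Rightarrow> real) \<Rightarrow> real" where
  "risk \<I> A n lam = (\<Sum>I\<in>active \<I> n. qform I A (lam I) / real (n I))"

definition feasible :: "nat set set \<Rightarrow> nat \<Rightarrow> (nat set \<Rightarrow> nat \<Rightarrow> real) \<Rightarrow> (nat \<Rightarrow> real)
    \<Rightarrow> (nat set \<Rightarrow> nat) \<Rightarrow> bool" where
  "feasible \<I> m c B n \<longleftrightarrow> (\<forall>r\<in>{1..m}. (\<Sum>I\<in>\<I>. real (n I) * c I r) \<le> B r)"

definition unbiased :: "nat \<Rightarrow> nat set set \<Rightarrow> (nat set \<Rightarrow> nat) \<Rightarrow> (nat set \<Rightarrow> nat \<Rightarrow> real)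
    \<Rightarrow> (nat \<Rightarrow> real) \<Rightarrow> bool" where
  "unbiased k \<I> n lam a \<longleftrightarrow>
     (\<forall>i\<in>{1..k}. (\<Sum>I\<in>active \<I> n. if i \<in> I then lam I i else 0) = a i)"
  \<comment> \<open>sum over I with n_I > 0 of P_I^T lambda_I equals a, coordinatewise\<close>

definition symmetric_mat :: "nat \<Rightarrow> (nat \<Rightarrow> nat \<Rightarrow> real) \<Rightarrow> bool" where
  "symmetric_mat k A \<longleftrightarrow> (\<forall>i\<in>{1..k}. \<forall>j\<in>{1..k}. A i j = A j i)"

definition posdef_mat :: "nat \<Rightarrow> (nat \<Rightarrow> nat \<Rightarrow> real) \<Rightarrow> bool" where
  "posdef_mat k A \<longleftrightarrow> (\<forall>x. (\<exists>i\<in>{1..k}. x i \<noteq> 0) \<longrightarrow> qform {1..k} A x > 0)"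

definition matvec :: "nat \<Rightarrow> (nat \<Rightarrow> nat \<Rightarrow> real) \<Rightarrow> (nat \<Rightarrow> real) \<Rightarrow> (nat \<Rightarrow> real)" where
  "matvec k A x = (\<lambda>i. \<Sum>j=1..k. A i j * x j)"

definition eigenvalue_mat :: "nat \<Rightarrow> (nat \<Rightarrow> nat \<Rightarrow> real) \<Rightarrow> real \<Rightarrow> bool" where
  "eigenvalue_mat k A \<mu> \<longleftrightarrow>
     (\<exists>x. (\<exists>i\<in>{1..k}. x i \<noteq> 0) \<and> (\<forall>i\<in>{1..k}. matvec k A x i = \<mu> * x i))"

definition min_eigenvalue :: "nat \<Rightarrow> (nat \<Rightarrow> nat \<Rightarrow> real) \<Rightarrow> real" where
  "min_eigenvalue k A = Min {\<mu>. eigenvalue_mat k A \<mu>}"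

definition vnorm :: "nat \<Rightarrow> (nat \<Rightarrow> real) \<Rightarrow> real" where
  "vnorm k x = sqrt (\<Sum>i=1..k. (x i)\<^sup>2)"

definition op_norm :: "nat \<Rightarrow> (nat \<Rightarrow> nat \<Rightarrow> real) \<Rightarrow> real" where
  "op_norm k A = Sup {vnorm k (matvec k A x) | x. vnorm k x = 1}"

end

theory Submission
  imports Defs "HOL-Analysis.Analysis" "Jordan_Normal_Form.Char_Poly"
begin

lemma eig_finite: "finite {\<mu>. eigenvalue_mat k A \<mu>}"
proof -
  define M :: "real mat" where "M = mat k k (\<lambda>(i,j). A (Suc i) (Suc j))"
  have M: "M \<in> carrier_mat k k" unfolding M_def by simp
  have "{\<mu>. eigenvalue_mat k A \<mu>} \<subseteq> {\<mu>. poly (char_poly M) \<mu> = 0}"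
  proof
    fix \<mu> assume "\<mu> \<in> {\<mu>. eigenvalue_mat k A \<mu>}"
    then obtain x where x1: "\<exists>i\<in>{1..k}. x i \<noteq> 0" and x2: "\<forall>i\<in>{1..k}. matvec k A x i = \<mu> * x i"
      unfolding eigenvalue_mat_def by auto
    define v where "v = vec k (\<lambda>i. x (Suc i))"
    have "eigenvector M v \<mu>" unfolding eigenvector_def
    proof (intro conjI)
      show "v \<in> carrier_vec (dim_row M)" using M unfolding v_def by simp
      from x1 obtain i where i: "i \<in> {1..k}" "x i \<noteq> 0" by auto
      then have "v $ (i - 1) \<noteq> 0" unfolding v_def by auto
      moreover have "i - 1 < k" using i by auto
      ultimately show "v \<noteq> 0\<^sub>v (dim_row M)" using M by auto
      show "M *\<^sub>v v = \<mu> \<cdot>\<^sub>v v"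
      proof (rule eq_vecI)
        show "dim_vec (M *\<^sub>v v) = dim_vec (\<mu> \<cdot>\<^sub>v v)" using M unfolding v_def by simp
        fix i assume "i < dim_vec (\<mu> \<cdot>\<^sub>v v)"
        then have i: "i < k" unfolding v_def by simp
        have "(M *\<^sub>v v) $ i = (\<Sum>j<k. A (Suc i) (Suc j) * x (Suc j))"
          using i M unfolding v_def M_def
          by (simp add: scalar_prod_def lessThan_atLeast0)
        also have "\<dots> = matvec k A x (Suc i)"
          unfolding matvec_def by (simp add: sum.atLeast1_atMost_eq)
        also have "\<dots> = \<mu> * x (Suc i)" using x2 i by auto
        also have "\<dots> = (\<mu> \<cdot>\<^sub>v v) $ i" using i unfolding v_def by simp
        finally show "(M *\<^sub>v v) $ i = (\<mu> \<cdot>\<^sub>v v) $ i" .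
      qed
    qed
    then have "eigenvalue M \<mu>" unfolding eigenvalue_def by blast
    then show "\<mu> \<in> {\<mu>. poly (char_poly M) \<mu> = 0}" using eigenvalue_root_char_poly[OF M] by simp
  qed
  moreover have "char_poly M \<noteq> 0" using degree_monic_char_poly[OF M] by auto
  then have "finite {\<mu>. poly (char_poly M) \<mu> = 0}" by (rule poly_roots_finite)
  ultimately show ?thesis by (rule finite_subset)
qed



lemma quad_zero:
  fixes b c :: real
  assumes "\<forall>t. 0 \<le> t * b + t\<^sup>2 * c"
  shows "b = 0"
proof (rule ccontr)
  assume b: "b \<noteq> 0"
  define d where "d = \<bar>c\<bar> + 1"
  have d: "d > 0" "c \<le> d - 1" unfolding d_def by auto
  define t where "t = - b / d"
  have "0 \<le> t * b + t\<^sup>2 * c" using assms by auto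
  also have "\<dots> \<le> t * b + t\<^sup>2 * (d - 1)" using d by (intro add_left_mono mult_left_mono) auto
  also have "\<dots> = - b\<^sup>2 / d\<^sup>2" unfolding t_def using d by (simp add: field_simps power2_eq_square)
  also have "\<dots> < 0" using b d by simp
  finally show False by simp
qed

lemma qform_expand:
  "qform K A (\<lambda>l. x l + t * y l) = qform K A x
     + t * (\<Sum>i\<in>K. \<Sum>j\<in>K. x i * A i j * y j + y i * A i j * x j) + t\<^sup>2 * qform K A y"
proof -
  have "qform K A (\<lambda>l. x l + t * y l) = (\<Sum>i\<in>K. \<Sum>j\<in>K. x i * A i j * x j
     + t * (x i * A i j * y j + y i * A i j * x j) + t\<^sup>2 * (y i * A i j * y j))"
    unfolding qform_def by (intro sum.cong refl) (simp add: algebra_simps power2_eq_square)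
  also have "\<dots> = qform K A x
     + t * (\<Sum>i\<in>K. \<Sum>j\<in>K. x i * A i j * y j + y i * A i j * x j) + t\<^sup>2 * qform K A y"
    unfolding qform_def by (simp add: sum.distrib sum_distrib_left distrib_left)
  finally show ?thesis .
qed

lemma bil_sym:
  fixes A :: "nat \<Rightarrow> nat \<Rightarrow> real"
  assumes "\<forall>i\<in>K. \<forall>j\<in>K. A i j = A j i"
  shows "(\<Sum>i\<in>K. \<Sum>j\<in>K. x i * A i j * y j + y i * A i j * x j) = 2 * (\<Sum>i\<in>K. \<Sum>j\<in>K. y i * A i j * x j)"
proof -
  have "(\<Sum>i\<in>K. \<Sum>j\<in>K. x i * A i j * y j) = (\<Sum>j\<in>K. \<Sum>i\<in>K. x i * A i j * y j)"
    by (rule sum.swap)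
  also have "\<dots> = (\<Sum>j\<in>K. \<Sum>i\<in>K. y j * A j i * x i)"
  proof (intro sum.cong refl)
    fix i j assume "j \<in> K" "i \<in> K"
    then have "A i j = A j i" using assms by blast
    then show "x i * A i j * y j = y j * A j i * x i" by (simp add: mult_ac)
  qed
  finally have "(\<Sum>i\<in>K. \<Sum>j\<in>K. x i * A i j * y j) = (\<Sum>i\<in>K. \<Sum>j\<in>K. y i * A i j * x j)" .
  then show ?thesis by (simp add: sum.distrib)
qed

lemma qform_eq_matvec: "qform {1..k} A x = (\<Sum>i=1..k. x i * matvec k A x i)"
  unfolding qform_def matvec_def by (simp add: sum_distrib_left algebra_simps)

lemma Nsum_zero:
  assumes "(\<Sum>i=1..(k::nat). (x i)\<^sup>2) = (0::real)" "i \<in> {1..k}"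
  shows "x i = 0"
proof -
  have "\<forall>i\<in>{1..k}. (x i)\<^sup>2 = 0" using assms(1) by (subst sum_nonneg_eq_0_iff[symmetric]) auto
  then show ?thesis using assms(2) by auto
qed

lemma qform_zero:
  assumes "(\<Sum>i=1..k. (x i)\<^sup>2) = (0::real)"
  shows "qform {1..k} A x = 0"
  unfolding qform_def using Nsum_zero[OF assms] by simp

lemma sphere_compact:
  "compact {x::nat\<Rightarrow>real. (\<forall>i\<in>-{1..k}. x i = 0) \<and> (\<Sum>i=1..k. (x i)\<^sup>2) = 1}" (is "compact ?U")
proof -
  define K :: "(nat \<Rightarrow> real) set" where "K = PiE UNIV (\<lambda>i. if i \<in> {1..k} then {-1..1} else {0})"
  have "compactin (product_topology (\<lambda>_. euclidean) UNIV) K"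
    unfolding K_def by (subst compactin_PiE) auto
  then have cK: "compact K" by (simp add: euclidean_product_topology)
  have "?U = (\<Inter>i\<in>-{1..k}. {x. x i = 0}) \<inter> {x. (\<Sum>i=1..k. (x i)\<^sup>2) = 1}" by auto
  moreover have "closed \<dots>"
    by (intro closed_Int closed_INT ballI closed_Collect_eq continuous_intros continuous_on_product_coordinates)
  ultimately have cU: "closed ?U" by simp
  have "?U \<subseteq> K"
  proof
    fix x assume x: "x \<in> ?U"
    have "x i \<in> (if i \<in> {1..k} then {-1..1} else {0})" for i
    proof (cases "i \<in> {1..k}")
      case True
      have "(x i)\<^sup>2 \<le> (\<Sum>i=1..k. (x i)\<^sup>2)" using True by (intro member_le_sum) auto
      then have "(x i)\<^sup>2 \<le> 1" using x by simp
      then have "\<bar>x i\<bar> \<le> 1" by (simp add: abs_square_le_1)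
      then show ?thesis using True by auto
    next
      case False then show ?thesis using x by auto
    qed
    then show "x \<in> K" unfolding K_def by auto
  qed
  then have "?U = K \<inter> ?U" by auto
  then show ?thesis using compact_Int_closed[OF cK cU] by simp
qed

lemma sum_delta_mult:
  assumes "i \<in> A" "finite A"
  shows "(\<Sum>j\<in>A. f j * (if j = i then 1 else 0)) = (f i::real)"
proof -
  have "(\<Sum>j\<in>A. f j * (if j = i then 1 else 0)) = (\<Sum>j\<in>A. if j = i then f j else 0)"
    by (intro sum.cong) auto
  then show ?thesis using assms by simp
qed

lemma min_eig_bound:
  fixes S :: "nat \<Rightarrow> nat \<Rightarrow> real" and k :: nat
  assumes k: "1 \<le> k" and sym: "symmetric_mat k S" and pd: "posdef_mat k S"
    and fin: "finite {\<mu>. eigenvalue_mat k S \<mu>}"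
  shows "0 < min_eigenvalue k S \<and> (\<forall>x. min_eigenvalue k S * (\<Sum>i=1..k. (x i)\<^sup>2) \<le> qform {1..k} S x)"
proof -
  define N where "N x = (\<Sum>i=1..k. (x i)\<^sup>2)" for x :: "nat \<Rightarrow> real"
  define Q where "Q x = qform {1..k} S x" for x
  define U where "U = {x::nat\<Rightarrow>real. (\<forall>i\<in>-{1..k}. x i = 0) \<and> (\<Sum>i=1..k. (x i)\<^sup>2) = 1}"
  have cU: "compact U" unfolding U_def by (rule sphere_compact)
  define e1 :: "nat \<Rightarrow> real" where "e1 = (\<lambda>i. if i = 1 then 1 else 0)"
  have "(\<Sum>i=1..k. (e1 i)\<^sup>2) = (\<Sum>i=1..k. if i = 1 then 1 else 0)"
    by (intro sum.cong) (auto simp: e1_def)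
  also have "\<dots> = 1" using k by simp
  finally have "e1 \<in> U" unfolding U_def e1_def by auto
  then have neU: "U \<noteq> {}" by auto
  have contQ: "continuous_on U Q" unfolding Q_def qform_def
    by (intro continuous_intros continuous_on_subset[OF continuous_on_product_coordinates] subset_UNIV)
  obtain x0 where x0U: "x0 \<in> U" and x0min: "\<forall>y\<in>U. Q x0 \<le> Q y"
    using continuous_attains_inf[OF cU neU contQ] by blast
  define g where "g = Q x0"
  have Nx0: "N x0 = 1" using x0U unfolding U_def N_def by auto
  have bound: "g * N x \<le> Q x" for x
  proof (cases "N x = 0")
    case True
    then show ?thesis using qform_zero[where k=k and x=x and A=S] unfolding N_def Q_def by simp
  next
    case False
    have "N x \<ge> 0" unfolding N_def by (intro sum_nonneg) auto
    with False have Npos: "N x > 0" by simp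
    define r where "r = sqrt (N x)"
    have r: "r > 0" "r\<^sup>2 = N x" unfolding r_def using Npos by auto
    define y where "y = (\<lambda>i. if i \<in> {1..k} then x i / r else 0)"
    have "N y = (\<Sum>i=1..k. (x i)\<^sup>2 / r\<^sup>2)" unfolding N_def y_def
      by (intro sum.cong refl) (simp add: power_divide)
    also have "\<dots> = N x / r\<^sup>2" unfolding N_def by (simp add: sum_divide_distrib)
    also have "\<dots> = 1" using r Npos by simp
    finally have "y \<in> U" unfolding U_def N_def y_def by auto
    then have "g \<le> Q y" using x0min unfolding g_def by auto
    also have "Q y = (\<Sum>i=1..k. \<Sum>j=1..k. x i * S i j * x j / r\<^sup>2)" unfolding Q_def qform_def y_def
      by (intro sum.cong refl) (simp add: power2_eq_square)
    also have "\<dots> = Q x / r\<^sup>2" unfolding Q_def qform_def by (simp add: sum_divide_distrib)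
    finally have "g \<le> Q x / N x" using r by simp
    then show ?thesis using Npos by (simp add: field_simps)
  qed
  have eig: "matvec k S x0 i = g * x0 i" if i: "i \<in> {1..k}" for i
  proof -
    define ei :: "nat \<Rightarrow> real" where "ei = (\<lambda>l. if l = i then 1 else 0)"
    have symK: "\<forall>a\<in>{1..k}. \<forall>b\<in>{1..k}. S a b = S b a" using sym unfolding symmetric_mat_def by blast
    have "\<forall>t. 0 \<le> t * (2 * matvec k S x0 i - 2 * g * x0 i) + t\<^sup>2 * (S i i - g)"
    proof
      fix t :: real
      have "0 \<le> Q (\<lambda>l. x0 l + t * ei l) - g * N (\<lambda>l. x0 l + t * ei l)" using bound by simp
      also have "Q (\<lambda>l. x0 l + t * ei l) = Q x0 + t * (2 * matvec k S x0 i) + t\<^sup>2 * S i i"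
      proof -
        have "(\<Sum>a\<in>{1..k}. \<Sum>b\<in>{1..k}. ei a * S a b * x0 b) = matvec k S x0 i"
        proof -
          have "(\<Sum>a\<in>{1..k}. \<Sum>b\<in>{1..k}. ei a * S a b * x0 b) = (\<Sum>a\<in>{1..k}. if a = i then (\<Sum>b\<in>{1..k}. S a b * x0 b) else 0)"
            by (intro sum.cong) (auto simp: ei_def)
          then show ?thesis unfolding matvec_def using i by simp
        qed
        moreover have "qform {1..k} S ei = S i i"
        proof -
          have "qform {1..k} S ei = (\<Sum>a\<in>{1..k}. if a = i then (\<Sum>b\<in>{1..k}. S a b * (if b = i then 1 else 0)) else 0)"
            unfolding qform_def by (intro sum.cong) (auto simp: ei_def)
          also have "\<dots> = (\<Sum>b\<in>{1..k}. S i b * (if b = i then 1 else 0))" using i by simp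
          also have "\<dots> = S i i" by (rule sum_delta_mult[OF i]) simp
          finally show ?thesis .
        qed
        ultimately show ?thesis unfolding Q_def qform_expand bil_sym[OF symK] by simp
      qed
      also have "N (\<lambda>l. x0 l + t * ei l) = N x0 + t * (2 * x0 i) + t\<^sup>2"
      proof -
        have "N (\<lambda>l. x0 l + t * ei l) = (\<Sum>l=1..k. (x0 l)\<^sup>2 + t * (2 * x0 l * ei l) + t\<^sup>2 * (ei l)\<^sup>2)"
          unfolding N_def by (intro sum.cong refl) (simp add: power2_eq_square algebra_simps)
        also have "\<dots> = N x0 + t * (\<Sum>l=1..k. 2 * x0 l * ei l) + t\<^sup>2 * (\<Sum>l=1..k. (ei l)\<^sup>2)"
          unfolding N_def by (simp add: sum.distrib sum_distrib_left)
        also have "(\<Sum>l=1..k. 2 * x0 l * ei l) = (\<Sum>l=1..k. if l = i then 2 * x0 l else 0)"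
          by (intro sum.cong) (auto simp: ei_def)
        also have "\<dots> = 2 * x0 i" using i by simp
        also have "(\<Sum>l=1..k. (ei l)\<^sup>2) = (\<Sum>l=1..k. if l = i then 1 else 0)"
          by (intro sum.cong) (auto simp: ei_def)
        also have "\<dots> = 1" using i by simp
        finally show ?thesis by simp
      qed
      finally show "0 \<le> t * (2 * matvec k S x0 i - 2 * g * x0 i) + t\<^sup>2 * (S i i - g)"
        using Nx0 unfolding g_def by (simp add: algebra_simps)
    qed
    then have "2 * matvec k S x0 i - 2 * g * x0 i = 0" by (rule quad_zero)
    then show ?thesis by simp
  qed
  have x0nz: "\<exists>i\<in>{1..k}. x0 i \<noteq> 0"
  proof (rule ccontr)
    assume "\<not> ?thesis"
    then have "N x0 = 0" unfolding N_def by auto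
    with Nx0 show False by simp
  qed
  have geig: "eigenvalue_mat k S g" unfolding eigenvalue_mat_def using x0nz eig by blast
  have lower: "g \<le> \<mu>" if ev: "eigenvalue_mat k S \<mu>" for \<mu>
  proof -
    obtain x where x1: "\<exists>i\<in>{1..k}. x i \<noteq> 0" and x2: "\<forall>i\<in>{1..k}. matvec k S x i = \<mu> * x i"
      using ev unfolding eigenvalue_mat_def by blast
    have "Q x = (\<Sum>i=1..k. x i * (\<mu> * x i))" unfolding Q_def qform_eq_matvec using x2 by simp
    also have "\<dots> = \<mu> * N x" unfolding N_def by (simp add: sum_distrib_left power2_eq_square mult_ac)
    finally have "g * N x \<le> \<mu> * N x" using bound[of x] by simp
    moreover have "N x > 0"
    proof -
      obtain i where "i \<in> {1..k}" "x i \<noteq> 0" using x1 by auto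
      then have "0 < (x i)\<^sup>2" by simp
      also have "(x i)\<^sup>2 \<le> N x" unfolding N_def using \<open>i \<in> {1..k}\<close> by (intro member_le_sum) auto
      finally show ?thesis .
    qed
    ultimately show ?thesis by simp
  qed
  have "min_eigenvalue k S = g" unfolding min_eigenvalue_def
    by (rule Min_eqI[OF fin]) (use lower geig in auto)
  moreover have "g > 0" unfolding g_def Q_def using pd x0nz unfolding posdef_mat_def by blast
  ultimately show ?thesis using bound unfolding N_def Q_def by simp
qed

lemma op_norm_bound:
  fixes D :: "nat \<Rightarrow> nat \<Rightarrow> real" and k :: nat
  assumes k: "1 \<le> k"
  shows "0 \<le> op_norm k D \<and> (\<forall>x. \<bar>qform {1..k} D x\<bar> \<le> op_norm k D * (\<Sum>i=1..k. (x i)\<^sup>2))"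
proof -
  define V where "V = {vnorm k (matvec k D x) | x. vnorm k x = 1}"
  define C where "C = sqrt (\<Sum>i=1..k. (\<Sum>j=1..k. \<bar>D i j\<bar>)\<^sup>2)"
  have bdd: "bdd_above V" unfolding bdd_above_def
  proof (intro exI ballI)
    fix v assume "v \<in> V"
    then obtain x where x: "vnorm k x = 1" and v: "v = vnorm k (matvec k D x)" unfolding V_def by auto
    have N1: "(\<Sum>i=1..k. (x i)\<^sup>2) = 1" using x unfolding vnorm_def by simp
    have xj: "\<bar>x j\<bar> \<le> 1" if "j \<in> {1..k}" for j
    proof -
      have "(x j)\<^sup>2 \<le> (\<Sum>i=1..k. (x i)\<^sup>2)" using that by (intro member_le_sum) auto
      then show ?thesis using N1 by (simp add: abs_square_le_1)
    qed
    have mi: "(matvec k D x i)\<^sup>2 \<le> (\<Sum>j=1..k. \<bar>D i j\<bar>)\<^sup>2" for i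
    proof -
      have "\<bar>matvec k D x i\<bar> \<le> (\<Sum>j=1..k. \<bar>D i j * x j\<bar>)" unfolding matvec_def by (rule sum_abs)
      also have "\<dots> \<le> (\<Sum>j=1..k. \<bar>D i j\<bar>)"
        using xj by (intro sum_mono) (auto simp: abs_mult intro: mult_left_le)
      finally have "\<bar>matvec k D x i\<bar> \<le> (\<Sum>j=1..k. \<bar>D i j\<bar>)" .
      then have "\<bar>matvec k D x i\<bar>\<^sup>2 \<le> (\<Sum>j=1..k. \<bar>D i j\<bar>)\<^sup>2" by (intro power_mono) auto
      then show ?thesis by simp
    qed
    show "v \<le> C" unfolding v C_def vnorm_def
      by (intro real_sqrt_le_mono sum_mono mi)
  qed
  define e1 :: "nat \<Rightarrow> real" where "e1 = (\<lambda>i. if i = 1 then 1 else 0)"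
  have "(\<Sum>i=1..k. (e1 i)\<^sup>2) = (\<Sum>i=1..k. if i = 1 then 1 else 0)"
    by (intro sum.cong) (auto simp: e1_def)
  also have "\<dots> = 1" using k by simp
  finally have "vnorm k e1 = 1" unfolding vnorm_def by simp
  then have e1V: "vnorm k (matvec k D e1) \<in> V" unfolding V_def by blast
  have nonneg: "0 \<le> op_norm k D"
  proof -
    have "0 \<le> vnorm k (matvec k D e1)" unfolding vnorm_def by (intro real_sqrt_ge_zero sum_nonneg) auto
    also have "\<dots> \<le> Sup V" by (rule cSup_upper[OF e1V bdd])
    finally show ?thesis unfolding op_norm_def V_def .
  qed
  have main: "\<bar>qform {1..k} D x\<bar> \<le> op_norm k D * (\<Sum>i=1..k. (x i)\<^sup>2)" for x
  proof -
    define N where "N = (\<Sum>i=1..k. (x i)\<^sup>2)"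
    have N0: "N \<ge> 0" unfolding N_def by (intro sum_nonneg) auto
    show ?thesis
    proof (cases "N = 0")
      case True
      then show ?thesis using qform_zero[where k=k and x=x and A=D] unfolding N_def by simp
    next
      case False
      with N0 have Npos: "N > 0" by simp
      define r where "r = vnorm k x"
      have r: "r = sqrt N" "r > 0" "r\<^sup>2 = N" unfolding r_def vnorm_def N_def using Npos N_def by auto
      define y where "y = (\<lambda>i. x i / r)"
      have "(\<Sum>i=1..k. (y i)\<^sup>2) = (\<Sum>i=1..k. (x i)\<^sup>2) / r\<^sup>2" unfolding y_def
        by (simp add: power_divide sum_divide_distrib)
      also have "\<dots> = 1" using r Npos unfolding N_def by simp
      finally have "vnorm k y = 1" unfolding vnorm_def by simp
      then have "vnorm k (matvec k D y) \<in> V" unfolding V_def by blast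
      then have "vnorm k (matvec k D y) \<le> op_norm k D" unfolding op_norm_def V_def[symmetric]
        by (rule cSup_upper[OF _ bdd])
      moreover have "matvec k D y = (\<lambda>i. matvec k D x i / r)" unfolding matvec_def y_def
        by (simp add: sum_divide_distrib)
      moreover have "vnorm k (\<lambda>i. matvec k D x i / r) = vnorm k (matvec k D x) / r"
      proof -
        have "(\<Sum>i=1..k. (matvec k D x i / r)\<^sup>2) = (\<Sum>i=1..k. (matvec k D x i)\<^sup>2) / r\<^sup>2"
          by (simp add: power_divide sum_divide_distrib)
        then show ?thesis unfolding vnorm_def using r by (simp add: real_sqrt_divide)
      qed
      ultimately have Dx: "vnorm k (matvec k D x) \<le> op_norm k D * r" using r by (simp add: field_simps)
      have "\<bar>qform {1..k} D x\<bar> = \<bar>\<Sum>i=1..k. x i * matvec k D x i\<bar>" unfolding qform_eq_matvec by (rule refl)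
      also have "\<dots> \<le> (\<Sum>i=1..k. \<bar>x i\<bar> * \<bar>matvec k D x i\<bar>)" by (rule order_trans[OF sum_abs]) (simp add: abs_mult)
      also have "\<dots> \<le> L2_set x {1..k} * L2_set (matvec k D x) {1..k}" by (rule L2_set_mult_ineq)
      also have "\<dots> = r * vnorm k (matvec k D x)" unfolding r_def vnorm_def L2_set_def by simp
      also have "\<dots> \<le> r * (op_norm k D * r)" using Dx r by (intro mult_left_mono) auto
      also have "\<dots> = op_norm k D * N" using r by (simp add: power2_eq_square mult_ac)
      finally show ?thesis unfolding N_def .
    qed
  qed
  show ?thesis using nonneg main by blast
qed

lemma qform_restr:
  fixes A :: "nat \<Rightarrow> nat \<Rightarrow> real" and k :: nat
  assumes I: "I \<subseteq> {1..k}"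
  shows "qform I A y = qform {1..k} A (\<lambda>i. if i \<in> I then y i else 0)"
proof -
  let ?z = "\<lambda>i. if i \<in> I then y i else 0"
  have "qform {1..k} A ?z = (\<Sum>i\<in>I. \<Sum>j\<in>{1..k}. ?z i * A i j * ?z j)"
    unfolding qform_def using I by (intro sum.mono_neutral_right) auto
  also have "\<dots> = (\<Sum>i\<in>I. \<Sum>j\<in>I. ?z i * A i j * ?z j)"
    using I by (intro sum.cong refl sum.mono_neutral_right) auto
  also have "\<dots> = qform I A y" unfolding qform_def by (intro sum.cong refl) auto
  finally show ?thesis by simp
qed

lemma qform_diff:
  "qform I S y - qform I Sh y = qform I (\<lambda>i j. S i j - Sh i j) y"
  unfolding qform_def by (simp add: sum_subtractf[symmetric] algebra_simps)

lemma risk_compare: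
  fixes S Sh :: "nat \<Rightarrow> nat \<Rightarrow> real" and g d :: real and k :: nat
  assumes Isub: "\<forall>I\<in>\<I>. I \<subseteq> {1..k}" and g: "g > 0"
    and boundS: "\<forall>x. g * (\<Sum>i=1..k. (x i)\<^sup>2) \<le> qform {1..k} S x"
    and boundD: "\<forall>x. \<bar>qform {1..k} (\<lambda>i j. S i j - Sh i j) x\<bar> \<le> d * (\<Sum>i=1..k. (x i)\<^sup>2)"
    and d: "0 \<le> d"
  shows "(1 - d/g) * risk \<I> S n lam \<le> risk \<I> Sh n lam \<and> risk \<I> Sh n lam \<le> (1 + d/g) * risk \<I> S n lam
         \<and> 0 \<le> risk \<I> S n lam"
proof -
  define t where "t = d / g"
  have t: "0 \<le> t" unfolding t_def using d g by simp
  have perI: "0 \<le> qform I S y \<and> \<bar>qform I S y - qform I Sh y\<bar> \<le> t * qform I S y"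
    if I: "I \<subseteq> {1..k}" for I y
  proof -
    define z where "z = (\<lambda>i. if i \<in> I then y i else 0)"
    define N where "N = (\<Sum>i=1..k. (z i)\<^sup>2)"
    have N0: "0 \<le> N" unfolding N_def by (intro sum_nonneg) auto
    have qS: "qform I S y = qform {1..k} S z" unfolding z_def by (rule qform_restr[OF I])
    have qD: "qform I S y - qform I Sh y = qform {1..k} (\<lambda>i j. S i j - Sh i j) z"
      unfolding qform_diff z_def by (rule qform_restr[OF I])
    have gN: "g * N \<le> qform I S y" using boundS qS unfolding N_def by simp
    have dN: "\<bar>qform I S y - qform I Sh y\<bar> \<le> d * N" using boundD qD unfolding N_def by simp
    have "d * N = t * (g * N)" unfolding t_def using g by simp
    also have "\<dots> \<le> t * qform I S y" using gN t by (rule mult_left_mono)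
    finally have "\<bar>qform I S y - qform I Sh y\<bar> \<le> t * qform I S y" using dN by simp
    moreover have "0 \<le> qform I S y" using gN g N0 by (smt (verit) mult_nonneg_nonneg)
    ultimately show ?thesis by simp
  qed
  let ?A = "active \<I> n"
  have actsub: "\<forall>I\<in>?A. I \<subseteq> {1..k}" using Isub unfolding active_def by auto
  have "(1 - t) * risk \<I> S n lam = (\<Sum>I\<in>?A. (1 - t) * qform I S (lam I) / real (n I))"
    unfolding risk_def by (simp add: sum_distrib_left)
  also have "\<dots> \<le> risk \<I> Sh n lam" unfolding risk_def
  proof (intro sum_mono divide_right_mono)
    fix I assume "I \<in> ?A"
    then have "\<bar>qform I S (lam I) - qform I Sh (lam I)\<bar> \<le> t * qform I S (lam I)" using perI actsub by blast
    then show "(1 - t) * qform I S (lam I) \<le> qform I Sh (lam I)" by (simp add: algebra_simps abs_le_iff)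
  qed simp
  finally have 1: "(1 - t) * risk \<I> S n lam \<le> risk \<I> Sh n lam" .
  have "risk \<I> Sh n lam \<le> (\<Sum>I\<in>?A. (1 + t) * qform I S (lam I) / real (n I))" unfolding risk_def
  proof (intro sum_mono divide_right_mono)
    fix I assume "I \<in> ?A"
    then have "\<bar>qform I S (lam I) - qform I Sh (lam I)\<bar> \<le> t * qform I S (lam I)" using perI actsub by blast
    then show "qform I Sh (lam I) \<le> (1 + t) * qform I S (lam I)" by (simp add: algebra_simps abs_le_iff)
  qed simp
  also have "\<dots> = (1 + t) * risk \<I> S n lam" unfolding risk_def by (simp add: sum_distrib_left)
  finally have 2: "risk \<I> Sh n lam \<le> (1 + t) * risk \<I> S n lam" .
  have 3: "0 \<le> risk \<I> S n lam" unfolding risk_def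
    using perI actsub by (intro sum_nonneg divide_nonneg_nonneg) auto
  show ?thesis using 1 2 3 unfolding t_def by simp
qed

theorem theoremE3:
  fixes k m :: nat
    and \<I> :: "nat set set"
    and c :: "nat set \<Rightarrow> nat \<Rightarrow> real" and B :: "nat \<Rightarrow> real"
    and S Sh :: "nat \<Rightarrow> nat \<Rightarrow> real"
    and a :: "nat \<Rightarrow> real"
    and nstar nhat :: "nat set \<Rightarrow> nat"
    and lamstar lamhat :: "nat set \<Rightarrow> nat \<Rightarrow> real"
    and I0 :: "nat set" and n0 :: nat
  assumes I_sub: "\<forall>I\<in>\<I>. I \<noteq> {} \<and> I \<subseteq> {1..k}"
    and c_nonneg: "\<forall>I\<in>\<I>. \<forall>r\<in>{1..m}. 0 \<le> c I r"
    and B_nonneg: "\<forall>r\<in>{1..m}. 0 \<le> B r"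
    and a_def: "a = (\<lambda>i. if i = 1 then 1 else 0)"
    and S_sym: "symmetric_mat k S" and S_pd: "posdef_mat k S"
    and Sh_sym: "symmetric_mat k Sh"
    and delta_le: "op_norm k (\<lambda>i j. S i j - Sh i j) \<le> min_eigenvalue k S / 2"
    and star_feas: "feasible \<I> m c B nstar" and star_unb: "unbiased k \<I> nstar lamstar a"
    and star_min: "\<forall>n lam. feasible \<I> m c B n \<and> unbiased k \<I> n lam a
                     \<longrightarrow> risk \<I> S nstar lamstar \<le> risk \<I> S n lam"
    and hat_feas: "feasible \<I> m c B nhat" and hat_unb: "unbiased k \<I> nhat lamhat a"
    and hat_min: "\<forall>n lam. feasible \<I> m c B n \<and> unbiased k \<I> n lam a
                     \<longrightarrow> risk \<I> Sh nhat lamhat \<le> risk \<I> Sh n lam"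
    and I0_in: "I0 \<in> \<I>" and one_in_I0: "1 \<in> I0"
    and n0_ge: "1 \<le> n0"
    and n0_fits: "\<forall>r\<in>{1..m}. real n0 * c I0 r \<le> B r"
    and n0_largest: "\<forall>n::nat. (\<forall>r\<in>{1..m}. real n * c I0 r \<le> B r) \<longrightarrow> n \<le> n0"
  shows "risk \<I> S nhat lamhat
           \<le> risk \<I> S nstar lamstar
              + 4 * op_norm k (\<lambda>i j. S i j - Sh i j) / min_eigenvalue k S * (S 1 1 / real n0)"
proof -
  define g where "g = min_eigenvalue k S"
  define d where "d = op_norm k (\<lambda>i j. S i j - Sh i j)"
  have I0sub: "I0 \<subseteq> {1..k}" using I_sub I0_in by blast
  have k: "1 \<le> k" using I0sub one_in_I0 by auto
  have G: "0 < g \<and> (\<forall>x. g * (\<Sum>i=1..k. (x i)\<^sup>2) \<le> qform {1..k} S x)"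
    unfolding g_def by (rule min_eig_bound[OF k S_sym S_pd eig_finite])
  have Dl: "0 \<le> d \<and> (\<forall>x. \<bar>qform {1..k} (\<lambda>i j. S i j - Sh i j) x\<bar> \<le> d * (\<Sum>i=1..k. (x i)\<^sup>2))"
    unfolding d_def by (rule op_norm_bound[OF k])
  have Isub: "\<forall>I\<in>\<I>. I \<subseteq> {1..k}" using I_sub by blast
  have finI: "finite \<I>" by (rule finite_subset[of _ "Pow {1..k}"]) (use Isub in auto)
  note cmp = risk_compare[OF Isub conjunct1[OF G] conjunct2[OF G] conjunct2[OF Dl] conjunct1[OF Dl]]
  define t where "t = d / g"
  have t0: "0 \<le> t" and t1: "t \<le> 1/2" unfolding t_def using G Dl delta_le unfolding d_def[symmetric] g_def[symmetric]
    by (auto simp: field_simps)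
  define Rh where "Rh = risk \<I> S nhat lamhat"
  define Rs where "Rs = risk \<I> S nstar lamstar"
  have "(1 - t) * Rh \<le> risk \<I> Sh nhat lamhat" unfolding Rh_def t_def using cmp by blast
  also have "\<dots> \<le> risk \<I> Sh nstar lamstar" using hat_min star_feas star_unb by blast
  also have "\<dots> \<le> (1 + t) * Rs" unfolding Rs_def t_def using cmp by blast
  finally have ch: "(1 - t) * Rh \<le> (1 + t) * Rs" .
  have Rs0: "0 \<le> Rs" unfolding Rs_def using cmp by blast
  have tt: "0 \<le> t * (2 - 4 * t)" using t0 t1 by (intro mult_nonneg_nonneg) auto
  have "1 + t \<le> (1 - t) * (1 + 4 * t)" using tt by (simp add: algebra_simps)
  then have "(1 + t) * Rs \<le> ((1 - t) * (1 + 4 * t)) * Rs"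
    using Rs0 by (intro mult_right_mono) auto
  with ch have "(1 - t) * Rh \<le> (1 - t) * ((1 + 4 * t) * Rs)" by (simp add: mult_ac)
  then have R1: "Rh \<le> (1 + 4 * t) * Rs" using t1 by (subst (asm) mult_le_cancel_left_pos) auto
  define n' where "n' = (\<lambda>I. if I = I0 then n0 else 0)"
  define lam' where "lam' = (\<lambda>I::nat set. a)"
  have act: "active \<I> n' = {I0}" unfolding active_def n'_def using I0_in n0_ge by auto
  have feas: "feasible \<I> m c B n'" unfolding feasible_def
  proof
    fix r assume r: "r \<in> {1..m}"
    have "(\<Sum>I\<in>\<I>. real (n' I) * c I r) = (\<Sum>I\<in>\<I>. if I = I0 then real n0 * c I r else 0)"
      unfolding n'_def by (intro sum.cong) auto
    also have "\<dots> = real n0 * c I0 r" using finI I0_in by simp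
    finally show "(\<Sum>I\<in>\<I>. real (n' I) * c I r) \<le> B r" using n0_fits r by simp
  qed
  have unb: "unbiased k \<I> n' lam' a" unfolding unbiased_def act lam'_def
    using one_in_I0 by (auto simp: a_def)
  have "Rs \<le> risk \<I> S n' lam'" unfolding Rs_def using star_min feas unb by blast
  also have "risk \<I> S n' lam' = qform I0 S a / real n0" unfolding risk_def act by (simp add: n'_def lam'_def)
  also have "qform I0 S a = S 1 1"
  proof -
    have finI0: "finite I0" using I0sub finite_subset by blast
    have "qform I0 S a = (\<Sum>i\<in>I0. if i = 1 then (\<Sum>j\<in>I0. S i j * (if j = 1 then 1 else 0)) else 0)"
      unfolding qform_def a_def by (intro sum.cong) auto
    also have "\<dots> = (\<Sum>j\<in>I0. S 1 j * (if j = 1 then 1 else 0))" using finI0 one_in_I0 by simp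
    also have "\<dots> = S 1 1" by (rule sum_delta_mult[OF one_in_I0 finI0])
    finally show ?thesis .
  qed
  finally have Rcl: "Rs \<le> S 1 1 / real n0" .
  have "Rh \<le> Rs + 4 * t * Rs" using R1 by (simp add: algebra_simps)
  also have "\<dots> \<le> Rs + 4 * t * (S 1 1 / real n0)" using Rcl t0 by (intro add_left_mono mult_left_mono) auto
  finally show ?thesis unfolding Rh_def Rs_def t_def d_def g_def by simp
qed

end
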